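(* Let $G$ be an upward planar single-source digraph with maximum in- and outdegree at most two. Then in every upward planar embedding of $G$, no edge of $G$ is a bad edge with respect to the outer face.
   Context: A planar drawing of a digraph is upward if every edge $(u,v)$ is drawn as a curve strictly increasing in $y$ from $u$ to $v$; an upward planar embedding is the equivalence class of upward planar drawings with the same left-to-right orderings of incoming edges and of outgoing edges around each vertex. A single-source digraph has exactly one vertex of indegree zero. If a vertex has two incoming (outgoing) edges, these are its left and right incoming (outgoing) edges according to the embedding. An edge $e=(u,v)$ is bad with respect to face $f$ if either $e$ is the left outgoing edge of $u$ and the left incoming edge of $v$ and $f$ is the face to the right of $e$, or $e$ is the right outgoing edge of $u$ and the right incoming edge of $v$ and $f$ is the face to the left of $e$. *)

theory Defs
  imports "HOL-Analysis.Analysis" "Graph_Theory.Digraph"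
begin

definition upward_planar_drawing ::
  "('a, 'b) pre_digraph \<Rightarrow> ('a \<Rightarrow> real \<times> real) \<Rightarrow> ('b \<Rightarrow> real \<Rightarrow> real \<times> real) \<Rightarrow> bool" where
  "upward_planar_drawing G pos \<gamma> \<longleftrightarrow>
     inj_on pos (verts G) \<and>
     (\<forall>e\<in>arcs G. path (\<gamma> e) \<and> pathstart (\<gamma> e) = pos (tail G e) \<and>
        pathfinish (\<gamma> e) = pos (head G e) \<and> strict_mono_on {0..1} (\<lambda>t. snd (\<gamma> e t))) \<and>
     (\<forall>e\<in>arcs G. \<forall>e'\<in>arcs G. e \<noteq> e' \<longrightarrow>
        path_image (\<gamma> e) \<inter> path_image (\<gamma> e') \<subseteq>
          pos ` ({tail G e, head G e} \<inter> {tail G e', head G e'})) \<and>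
     (\<forall>v\<in>verts G. \<forall>e\<in>arcs G. pos v \<in> path_image (\<gamma> e) \<longrightarrow> v = tail G e \<or> v = head G e)"

text \<open>The point set of the drawing; its complement splits into the faces.\<close>
definition drawing_set ::
  "('a, 'b) pre_digraph \<Rightarrow> ('a \<Rightarrow> real \<times> real) \<Rightarrow> ('b \<Rightarrow> real \<Rightarrow> real \<times> real) \<Rightarrow> (real \<times> real) set" where
  "drawing_set G pos \<gamma> = pos ` verts G \<union> (\<Union>e\<in>arcs G. path_image (\<gamma> e))"

definition left_near_start :: "('b \<Rightarrow> real \<Rightarrow> real \<times> real) \<Rightarrow> 'b \<Rightarrow> 'b \<Rightarrow> bool" where
  "left_near_start \<gamma> e1 e2 \<longleftrightarrow> (\<exists>\<delta>>0. \<delta> \<le> 1 \<and>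
     (\<forall>s\<in>{0<..<\<delta>}. \<forall>t\<in>{0<..<\<delta>}. snd (\<gamma> e1 s) = snd (\<gamma> e2 t) \<longrightarrow> fst (\<gamma> e1 s) < fst (\<gamma> e2 t)))"

definition left_near_end :: "('b \<Rightarrow> real \<Rightarrow> real \<times> real) \<Rightarrow> 'b \<Rightarrow> 'b \<Rightarrow> bool" where
  "left_near_end \<gamma> e1 e2 \<longleftrightarrow> (\<exists>\<delta>>0. \<delta> \<le> 1 \<and>
     (\<forall>s\<in>{1-\<delta><..<1}. \<forall>t\<in>{1-\<delta><..<1}. snd (\<gamma> e1 s) = snd (\<gamma> e2 t) \<longrightarrow> fst (\<gamma> e1 s) < fst (\<gamma> e2 t)))"

definition left_outgoing :: "('a, 'b) pre_digraph \<Rightarrow> ('b \<Rightarrow> real \<Rightarrow> real \<times> real) \<Rightarrow> 'b \<Rightarrow> bool" where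
  "left_outgoing G \<gamma> e \<longleftrightarrow> (\<exists>e'\<in>arcs G. e' \<noteq> e \<and> tail G e' = tail G e \<and> left_near_start \<gamma> e e')"

definition right_outgoing :: "('a, 'b) pre_digraph \<Rightarrow> ('b \<Rightarrow> real \<Rightarrow> real \<times> real) \<Rightarrow> 'b \<Rightarrow> bool" where
  "right_outgoing G \<gamma> e \<longleftrightarrow> (\<exists>e'\<in>arcs G. e' \<noteq> e \<and> tail G e' = tail G e \<and> left_near_start \<gamma> e' e)"

definition left_incoming :: "('a, 'b) pre_digraph \<Rightarrow> ('b \<Rightarrow> real \<Rightarrow> real \<times> real) \<Rightarrow> 'b \<Rightarrow> bool" where
  "left_incoming G \<gamma> e \<longleftrightarrow> (\<exists>e'\<in>arcs G. e' \<noteq> e \<and> head G e' = head G e \<and> left_near_end \<gamma> e e')"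

definition right_incoming :: "('a, 'b) pre_digraph \<Rightarrow> ('b \<Rightarrow> real \<Rightarrow> real \<times> real) \<Rightarrow> 'b \<Rightarrow> bool" where
  "right_incoming G \<gamma> e \<longleftrightarrow> (\<exists>e'\<in>arcs G. e' \<noteq> e \<and> head G e' = head G e \<and> left_near_end \<gamma> e' e)"

text \<open>The face immediately to the right (left) of arc e is the outer face,
i.e. the unbounded component of the complement of the drawing.\<close>
definition right_face_outer ::
  "('a, 'b) pre_digraph \<Rightarrow> ('a \<Rightarrow> real \<times> real) \<Rightarrow> ('b \<Rightarrow> real \<Rightarrow> real \<times> real) \<Rightarrow> 'b \<Rightarrow> bool" where
  "right_face_outer G pos \<gamma> e \<longleftrightarrow> (\<exists>s\<in>{0<..<1}. \<exists>\<epsilon>>0. \<forall>t\<in>{0<..<\<epsilon>}.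
      \<gamma> e s + (t, 0) \<in> outside (drawing_set G pos \<gamma>))"

definition left_face_outer ::
  "('a, 'b) pre_digraph \<Rightarrow> ('a \<Rightarrow> real \<times> real) \<Rightarrow> ('b \<Rightarrow> real \<Rightarrow> real \<times> real) \<Rightarrow> 'b \<Rightarrow> bool" where
  "left_face_outer G pos \<gamma> e \<longleftrightarrow> (\<exists>s\<in>{0<..<1}. \<exists>\<epsilon>>0. \<forall>t\<in>{0<..<\<epsilon>}.
      \<gamma> e s - (t, 0) \<in> outside (drawing_set G pos \<gamma>))"

definition bad_wrt_outer_face ::
  "('a, 'b) pre_digraph \<Rightarrow> ('a \<Rightarrow> real \<times> real) \<Rightarrow> ('b \<Rightarrow> real \<Rightarrow> real \<times> real) \<Rightarrow> 'b \<Rightarrow> bool" where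
  "bad_wrt_outer_face G pos \<gamma> e \<longleftrightarrow>
     (left_outgoing G \<gamma> e \<and> left_incoming G \<gamma> e \<and> right_face_outer G pos \<gamma> e) \<or>
     (right_outgoing G \<gamma> e \<and> right_incoming G \<gamma> e \<and> left_face_outer G pos \<gamma> e)"

definition single_source :: "('a, 'b) pre_digraph \<Rightarrow> bool" where
  "single_source G \<longleftrightarrow> (\<exists>!s. s \<in> verts G \<and> in_degree G s = 0)"

end

theory Submission
  imports Defs
begin


lemma region_not_outside:
  fixes f g :: "real \<Rightarrow> real" and D :: "(real\<times>real) set"
  assumes ab: "a < b" and cf: "continuous_on {a..b} f" and cg: "continuous_on {a..b} g"
    and fa: "f a = g a" and fb: "f b = g b"
    and lt: "\<forall>y\<in>{a<..<b}. f y < g y"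
    and inD: "\<forall>y\<in>{a..b}. (f y, y) \<in> D \<and> (g y, y) \<in> D"
    and y0: "y0 \<in> {a<..<b}" and x0: "f y0 < x0" "x0 < g y0"
  shows "(x0, y0) \<notin> outside D"
proof
  assume out: "(x0, y0) \<in> outside D"
  define cl where "cl = (\<lambda>y::real. max a (min b y))"
  have ccl: "continuous_on UNIV cl" unfolding cl_def by (intro continuous_intros)
  have clr: "cl y \<in> {a..b}" for y using ab unfolding cl_def by auto
  have clid: "y \<in> {a..b} \<Longrightarrow> cl y = y" for y unfolding cl_def by auto
  define f' where "f' = f \<circ> cl"
  define g' where "g' = g \<circ> cl"
  have cf': "continuous_on UNIV f'" unfolding f'_def
    by (rule continuous_on_compose[OF ccl continuous_on_subset[OF cf]]) (use clr in auto)
  have cg': "continuous_on UNIV g'" unfolding g'_def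
    by (rule continuous_on_compose[OF ccl continuous_on_subset[OF cg]]) (use clr in auto)
  define \<Omega> where "\<Omega> = {q::real\<times>real. a < snd q \<and> snd q < b \<and> f' (snd q) < fst q \<and> fst q < g' (snd q)}"
  define K where "K = {q::real\<times>real. a \<le> snd q \<and> snd q \<le> b \<and> f' (snd q) \<le> fst q \<and> fst q \<le> g' (snd q)}"
  have cs: "continuous_on UNIV (snd :: real\<times>real \<Rightarrow> real)" by (intro continuous_intros)
  have cfs: "continuous_on UNIV (\<lambda>q::real\<times>real. f' (snd q))"
    by (rule continuous_on_compose2[OF cf' cs]) auto
  have cgs: "continuous_on UNIV (\<lambda>q::real\<times>real. g' (snd q))"
    by (rule continuous_on_compose2[OF cg' cs]) auto
  have cfst: "continuous_on UNIV (fst :: real\<times>real \<Rightarrow> real)" by (intro continuous_intros)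
  have ca: "continuous_on UNIV (\<lambda>q::real\<times>real. a)" by (intro continuous_intros)
  have cb: "continuous_on UNIV (\<lambda>q::real\<times>real. b)" by (intro continuous_intros)
  have "\<Omega> = {q. a < snd q} \<inter> {q. snd q < b} \<inter> {q. f' (snd q) < fst q} \<inter> {q. fst q < g' (snd q)}"
    unfolding \<Omega>_def by auto
  hence openO: "open \<Omega>"
    using open_Collect_less[OF ca cs] open_Collect_less[OF cs cb]
      open_Collect_less[OF cfs cfst] open_Collect_less[OF cfst cgs] by auto
  have "K = {q. a \<le> snd q} \<inter> {q. snd q \<le> b} \<inter> {q. f' (snd q) \<le> fst q} \<inter> {q. fst q \<le> g' (snd q)}"
    unfolding K_def by auto
  hence closedK: "closed K"
    using closed_Collect_le[OF ca cs] closed_Collect_le[OF cs cb]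
      closed_Collect_le[OF cfs cfst] closed_Collect_le[OF cfst cgs] by auto
  have OK: "\<Omega> \<subseteq> K" unfolding \<Omega>_def K_def by auto
  have front: "frontier \<Omega> \<subseteq> D"
  proof
    fix q assume q: "q \<in> frontier \<Omega>"
    have "q \<in> closure \<Omega>" "q \<notin> \<Omega>" using q openO by (auto simp: frontier_def interior_open)
    hence qK: "q \<in> K" using closure_minimal[OF OK closedK] by auto
    obtain x y where qxy: "q = (x, y)" by (cases q)
    have yab: "y \<in> {a..b}" using qK qxy K_def by auto
    have fy: "f' y = f y" "g' y = g y" using clid[OF yab] f'_def g'_def by auto
    have bnd: "f y \<le> x" "x \<le> g y" using qK qxy K_def fy by auto
    have "y = a \<or> y = b \<or> x = f y \<or> x = g y"
      using \<open>q \<notin> \<Omega>\<close> qxy yab fy bnd unfolding \<Omega>_def by auto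
    moreover have "y = a \<Longrightarrow> x = f y" using bnd fa by auto
    moreover have "y = b \<Longrightarrow> x = f y" using bnd fb by auto
    ultimately have "x = f y \<or> x = g y" by auto
    thus "q \<in> D" using inD yab qxy by auto
  qed
  obtain M where M: "\<forall>y\<in>{a..b}. norm (f y) \<le> M" 
    using compact_imp_bounded[OF compact_continuous_image[OF cf compact_Icc]]
    unfolding bounded_iff by auto
  obtain N where N: "\<forall>y\<in>{a..b}. norm (g y) \<le> N" 
    using compact_imp_bounded[OF compact_continuous_image[OF cg compact_Icc]]
    unfolding bounded_iff by auto
  have "\<Omega> \<subseteq> cbox (-M, a) (N, b)"
  proof
    fix q assume "q \<in> \<Omega>"
    then obtain x y where q: "q = (x,y)" and y: "a < y" "y < b" and xy: "f' y < x" "x < g' y"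
      unfolding \<Omega>_def by (cases q) auto
    have e: "f' y = f y" "g' y = g y" using clid y f'_def g'_def by auto
    have "norm (f y) \<le> M" "norm (g y) \<le> N" using M N y by auto
    hence "-M \<le> x" "x \<le> N" using e xy by auto
    thus "q \<in> cbox (-M, a) (N, b)" using y q by (auto simp: cbox_Pair_eq)
  qed
  hence bO: "bounded \<Omega>" using bounded_cbox bounded_subset by blast
  define C where "C = connected_component_set (- D) (x0, y0)"
  have nb: "\<not> bounded C" using out unfolding outside_def C_def by auto
  have pD: "(x0, y0) \<notin> D" using out unfolding outside_def by auto
  have pO: "(x0, y0) \<in> \<Omega>" using y0 x0 clid f'_def g'_def unfolding \<Omega>_def by auto
  have pC: "(x0,y0) \<in> C" using pD C_def by auto
  have CD: "C \<subseteq> - D" unfolding C_def by (rule connected_component_subset)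
  have "C \<subseteq> \<Omega>"
  proof (rule ccontr)
    assume "\<not> C \<subseteq> \<Omega>"
    hence "C - \<Omega> \<noteq> {}" by auto
    moreover have "C \<inter> \<Omega> \<noteq> {}" using pC pO by auto
    moreover have "connected C" unfolding C_def by (rule connected_connected_component)
    ultimately have "C \<inter> frontier \<Omega> \<noteq> {}"
      using connected_Int_frontier[of C \<Omega>] by blast
    thus False using CD front by auto
  qed
  thus False using nb bO bounded_subset by blast
qed


definition hinv :: "('b \<Rightarrow> real \<Rightarrow> real \<times> real) \<Rightarrow> 'b \<Rightarrow> real \<Rightarrow> real" where
  "hinv \<gamma> e y = inv_into {0..1} (\<lambda>t. snd (\<gamma> e t)) y"

definition phi :: "('b \<Rightarrow> real \<Rightarrow> real \<times> real) \<Rightarrow> 'b \<Rightarrow> real \<Rightarrow> real" where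
  "phi \<gamma> e y = fst (\<gamma> e (hinv \<gamma> e y))"

locale updraw =
  fixes G :: "('a, 'b) pre_digraph" and pos :: "'a \<Rightarrow> real \<times> real"
    and \<gamma> :: "'b \<Rightarrow> real \<Rightarrow> real \<times> real"
  assumes fin: "fin_digraph G" and D: "upward_planar_drawing G pos \<gamma>"
begin

abbreviation Y where "Y v \<equiv> snd (pos v)"

lemma arc_basic:
  assumes "e \<in> arcs G"
  shows "strict_mono_on {0..1} (\<lambda>t. snd (\<gamma> e t))" "continuous_on {0..1} (\<gamma> e)"
    "\<gamma> e 0 = pos (tail G e)" "\<gamma> e 1 = pos (head G e)"
  using D assms unfolding upward_planar_drawing_def path_def pathstart_def pathfinish_def by auto

lemma arc_Y: assumes "e \<in> arcs G" shows "Y (tail G e) < Y (head G e)"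
proof -
  have "snd (\<gamma> e 0) < snd (\<gamma> e 1)" using arc_basic(1)[OF assms]
    by (rule strict_mono_onD) auto
  thus ?thesis using arc_basic[OF assms] by simp
qed

lemma arc_cont_snd: assumes "e \<in> arcs G" shows "continuous_on {0..1} (\<lambda>t. snd (\<gamma> e t))"
  using arc_basic(2)[OF assms] by (intro continuous_intros)

lemma arc_image: assumes "e \<in> arcs G"
  shows "(\<lambda>t. snd (\<gamma> e t)) ` {0..1} = {Y (tail G e)..Y (head G e)}"
proof
  show "(\<lambda>t. snd (\<gamma> e t)) ` {0..1} \<subseteq> {Y (tail G e)..Y (head G e)}"
  proof
    fix y assume "y \<in> (\<lambda>t. snd (\<gamma> e t)) ` {0..1}"
    then obtain t where t: "t \<in> {0..1}" "y = snd (\<gamma> e t)" by auto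
    have "snd (\<gamma> e 0) \<le> snd (\<gamma> e t)" "snd (\<gamma> e t) \<le> snd (\<gamma> e 1)"
      using t strict_mono_on_leD[OF arc_basic(1)[OF assms]] by auto
    thus "y \<in> {Y (tail G e)..Y (head G e)}" using t arc_basic[OF assms] by auto
  qed
  show "{Y (tail G e)..Y (head G e)} \<subseteq> (\<lambda>t. snd (\<gamma> e t)) ` {0..1}"
  proof
    fix y assume y: "y \<in> {Y (tail G e)..Y (head G e)}"
    have "\<exists>x\<ge>0. x \<le> 1 \<and> snd (\<gamma> e x) = y"
      by (rule IVT'[OF _ _ _ arc_cont_snd[OF assms]]) (use y arc_basic[OF assms] in auto)
    thus "y \<in> (\<lambda>t. snd (\<gamma> e t)) ` {0..1}" by force
  qed
qed

lemma arc_inj: assumes "e \<in> arcs G" shows "inj_on (\<lambda>t. snd (\<gamma> e t)) {0..1}"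
  using strict_mono_on_imp_inj_on[OF arc_basic(1)[OF assms]] .

lemma hinv_props:
  assumes "e \<in> arcs G" "y \<in> {Y (tail G e)..Y (head G e)}"
  shows "hinv \<gamma> e y \<in> {0..1}" "snd (\<gamma> e (hinv \<gamma> e y)) = y"
proof -
  have y: "y \<in> (\<lambda>t. snd (\<gamma> e t)) ` {0..1}" using assms arc_image[OF assms(1)] by simp
  show "hinv \<gamma> e y \<in> {0..1}" unfolding hinv_def by (rule inv_into_into[OF y])
  show "snd (\<gamma> e (hinv \<gamma> e y)) = y" unfolding hinv_def using f_inv_into_f[OF y] by simp
qed

lemma hinv_inv:
  assumes "e \<in> arcs G" "t \<in> {0..1}"
  shows "hinv \<gamma> e (snd (\<gamma> e t)) = t"
  unfolding hinv_def using inv_into_f_f[OF arc_inj[OF assms(1)] assms(2)] .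

lemma hinv_cont: assumes "e \<in> arcs G"
  shows "continuous_on {Y (tail G e)..Y (head G e)} (hinv \<gamma> e)"
proof -
  have "continuous_on ((\<lambda>t. snd (\<gamma> e t)) ` {0..1}) (hinv \<gamma> e)"
    by (rule continuous_on_inv[OF arc_cont_snd[OF assms] compact_Icc]) (use hinv_inv[OF assms] in auto)
  thus ?thesis using arc_image[OF assms] by simp
qed

lemma phi_cont: assumes "e \<in> arcs G"
  shows "continuous_on {Y (tail G e)..Y (head G e)} (phi \<gamma> e)"
proof -
  have "continuous_on {Y (tail G e)..Y (head G e)} (\<lambda>y. fst (\<gamma> e (hinv \<gamma> e y)))"
  proof (rule continuous_on_compose2[where g="\<lambda>t. fst (\<gamma> e t)" and t="{0..1}", OF _ hinv_cont[OF assms]])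
    show "continuous_on {0..1} (\<lambda>t. fst (\<gamma> e t))" using arc_basic(2)[OF assms] by (intro continuous_intros)
    show "hinv \<gamma> e ` {Y (tail G e)..Y (head G e)} \<subseteq> {0..1}" using hinv_props(1)[OF assms] by auto
  qed
  thus ?thesis unfolding phi_def .
qed

lemma phi_point:
  assumes "e \<in> arcs G" "y \<in> {Y (tail G e)..Y (head G e)}"
  shows "(phi \<gamma> e y, y) = \<gamma> e (hinv \<gamma> e y)" "(phi \<gamma> e y, y) \<in> path_image (\<gamma> e)"
proof -
  show "(phi \<gamma> e y, y) = \<gamma> e (hinv \<gamma> e y)"
    using hinv_props[OF assms] unfolding phi_def by (metis prod.collapse)
  thus "(phi \<gamma> e y, y) \<in> path_image (\<gamma> e)"
    using hinv_props[OF assms] unfolding path_image_def by auto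
qed

lemma phi_ends: assumes "e \<in> arcs G"
  shows "phi \<gamma> e (Y (tail G e)) = fst (pos (tail G e))" "phi \<gamma> e (Y (head G e)) = fst (pos (head G e))"
  using hinv_inv[OF assms, of 0] hinv_inv[OF assms, of 1] arc_basic[OF assms]
  unfolding phi_def by auto

lemma phi_param: assumes "e \<in> arcs G" "t \<in> {0..1}"
  shows "phi \<gamma> e (snd (\<gamma> e t)) = fst (\<gamma> e t)"
  using hinv_inv[OF assms] unfolding phi_def by simp

end

fun chain :: "('a,'b) pre_digraph \<Rightarrow> 'a \<Rightarrow> 'b list \<Rightarrow> 'a \<Rightarrow> bool" where
  "chain G w [] z = (w = z \<and> w \<in> verts G)"
| "chain G w (e#es) z = (e \<in> arcs G \<and> tail G e = w \<and> chain G (head G e) es z)"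

fun cf :: "('a,'b) pre_digraph \<Rightarrow> ('a \<Rightarrow> real \<times> real) \<Rightarrow> ('b \<Rightarrow> real \<Rightarrow> real \<times> real) \<Rightarrow> 'a \<Rightarrow> 'b list \<Rightarrow> real \<Rightarrow> real" where
  "cf G pos \<gamma> w [] y = fst (pos w)"
| "cf G pos \<gamma> w (e#es) y = (if y \<le> snd (pos (head G e)) then phi \<gamma> e y else cf G pos \<gamma> (head G e) es y)"

definition vl :: "('a,'b) pre_digraph \<Rightarrow> 'a \<Rightarrow> 'b list \<Rightarrow> 'a list" where
  "vl G w es = w # map (head G) es"

context updraw begin

lemma wf: "wf_digraph G" using fin unfolding fin_digraph_def by auto

lemma chain_verts:
  "chain G w es z \<Longrightarrow> w \<in> verts G \<and> z \<in> verts G \<and> (\<forall>v\<in>set (vl G w es). v \<in> verts G \<and> Y w \<le> Y v \<and> Y v \<le> Y z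
      \<and> (v = z \<or> Y v < Y z) \<and> (v = w \<or> Y w < Y v))"
proof (induction es arbitrary: w)
  case Nil thus ?case by (auto simp: vl_def)
next
  case (Cons e es)
  hence e: "e \<in> arcs G" "tail G e = w" "chain G (head G e) es z" by auto
  have lt: "Y w < Y (head G e)" using arc_Y[OF e(1)] e(2) by simp
  have IH: "head G e \<in> verts G" "z \<in> verts G"
     "\<forall>v\<in>set (vl G (head G e) es). v \<in> verts G \<and> Y (head G e) \<le> Y v \<and> Y v \<le> Y z
      \<and> (v = z \<or> Y v < Y z) \<and> (v = head G e \<or> Y (head G e) < Y v)"
    using Cons.IH[OF e(3)] by auto
  have hz: "Y (head G e) \<le> Y z" using IH(3) by (auto simp: vl_def)
  have wv: "w \<in> verts G" using wf_digraph.tail_in_verts[OF wf e(1)] e(2) by simp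
  have "vl G w (e#es) = w # vl G (head G e) es" by (simp add: vl_def)
  thus ?case using IH lt hz wv by force
qed

lemma chain_nonempty_lt: "chain G w es z \<Longrightarrow> es \<noteq> [] \<Longrightarrow> Y w < Y z"
proof (cases es)
  case (Cons e es')
  assume c: "chain G w es z"
  hence "Y (head G e) \<le> Y z" "Y (tail G e) < Y (head G e)" "tail G e = w"
    using chain_verts[of "head G e" es' z] Cons arc_Y by (auto simp: vl_def)
  thus ?thesis by simp
qed simp

lemma chain_arcs: "chain G w es z \<Longrightarrow> a \<in> set es \<Longrightarrow>
    a \<in> arcs G \<and> tail G a \<in> set (vl G w es) \<and> head G a \<in> set (vl G w es)"
proof (induction es arbitrary: w)
  case Nil thus ?case by simp
next
  case (Cons e es)
  hence e: "e \<in> arcs G" "tail G e = w" "chain G (head G e) es z" by auto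
  have "vl G w (e#es) = w # vl G (head G e) es" by (simp add: vl_def)
  moreover have "head G e \<in> set (vl G (head G e) es)" by (simp add: vl_def)
  ultimately show ?case using Cons e by auto
qed

lemma chain_append: "chain G w (P @ Q) z \<longleftrightarrow> (\<exists>m. chain G w P m \<and> chain G m Q z)"
proof (induction P arbitrary: w)
  case Nil
  show ?case using chain_verts[of w Q z] by auto
next
  case (Cons a P) thus ?case by auto
qed

lemma cf_ends: "chain G w es z \<Longrightarrow> cf G pos \<gamma> w es (Y w) = fst (pos w) \<and> cf G pos \<gamma> w es (Y z) = fst (pos z)"
proof (induction es arbitrary: w)
  case Nil thus ?case by simp
next
  case (Cons e es)
  hence e: "e \<in> arcs G" "tail G e = w" "chain G (head G e) es z" by auto
  have lt: "Y w < Y (head G e)" using arc_Y[OF e(1)] e(2) by simp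
  have hz: "Y (head G e) \<le> Y z" using chain_verts[OF e(3)] by (auto simp: vl_def)
  have s: "cf G pos \<gamma> w (e#es) (Y w) = fst (pos w)" using lt phi_ends(1)[OF e(1)] e(2) by simp
  have "cf G pos \<gamma> w (e#es) (Y z) = fst (pos z)"
  proof (cases "Y z \<le> Y (head G e)")
    case True
    hence eq: "Y z = Y (head G e)" using hz by simp
    hence "es = []" using chain_nonempty_lt[OF e(3)] by auto
    hence "head G e = z" using e(3) by simp
    thus ?thesis using phi_ends(2)[OF e(1)] by simp
  next
    case False thus ?thesis using Cons.IH[OF e(3)] by simp
  qed
  thus ?case using s by simp
qed

lemma cf_cont: "chain G w es z \<Longrightarrow> continuous_on {Y w..Y z} (cf G pos \<gamma> w es)"
proof (induction es arbitrary: w)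
  case Nil thus ?case by (simp add: continuous_on_const)
next
  case (Cons e es)
  hence e: "e \<in> arcs G" "tail G e = w" "chain G (head G e) es z" by auto
  have lt: "Y w < Y (head G e)" using arc_Y[OF e(1)] e(2) by simp
  have hz: "Y (head G e) \<le> Y z" using chain_verts[OF e(3)] by (auto simp: vl_def)
  have un: "{Y w..Y z} = {Y w..Y (head G e)} \<union> {Y (head G e)..Y z}" using lt hz by auto
  have fe: "cf G pos \<gamma> w (e#es) = (\<lambda>y. if y \<le> Y (head G e) then phi \<gamma> e y else cf G pos \<gamma> (head G e) es y)"
    by (rule ext) simp
  have "continuous_on ({Y w..Y (head G e)} \<union> {Y (head G e)..Y z})
      (\<lambda>y. if y \<le> Y (head G e) then phi \<gamma> e y else cf G pos \<gamma> (head G e) es y)"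
  proof (rule continuous_on_cases)
    show "continuous_on {Y w..Y (head G e)} (phi \<gamma> e)" using phi_cont[OF e(1)] e(2) by simp
    show "continuous_on {Y (head G e)..Y z} (cf G pos \<gamma> (head G e) es)" using Cons.IH[OF e(3)] .
    show "\<forall>x. x \<in> {Y w..Y (head G e)} \<and> \<not> x \<le> Y (head G e) \<or> x \<in> {Y (head G e)..Y z} \<and> x \<le> Y (head G e) \<longrightarrow>
        phi \<gamma> e x = cf G pos \<gamma> (head G e) es x"
      using phi_ends(2)[OF e(1)] cf_ends[OF e(3)] by auto
  qed auto
  thus ?case using un fe by simp
qed

lemma cf_on_arc: "chain G w es z \<Longrightarrow> es \<noteq> [] \<Longrightarrow> y \<in> {Y w..Y z} \<Longrightarrow>
    \<exists>a\<in>set es. (cf G pos \<gamma> w es y, y) \<in> path_image (\<gamma> a)"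
proof (induction es arbitrary: w)
  case Nil thus ?case by simp
next
  case (Cons e es)
  hence e: "e \<in> arcs G" "tail G e = w" "chain G (head G e) es z" by auto
  show ?case
  proof (cases "y \<le> Y (head G e)")
    case True
    hence "(cf G pos \<gamma> w (e#es) y, y) \<in> path_image (\<gamma> e)"
      using phi_point(2)[OF e(1), of y] Cons.prems e(2) by auto
    thus ?thesis by auto
  next
    case False
    hence "es \<noteq> []" using e(3) Cons.prems by (cases es) auto
    thus ?thesis using Cons.IH[OF e(3)] Cons.prems False by auto
  qed
qed

lemma cf_append: "chain G w P m \<Longrightarrow> chain G m Q z \<Longrightarrow> Y m \<le> y \<Longrightarrow>
    cf G pos \<gamma> w (P @ Q) y = cf G pos \<gamma> m Q y"
proof (induction P arbitrary: w)
  case Nil thus ?case by simp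
next
  case (Cons a P)
  hence a: "a \<in> arcs G" "tail G a = w" "chain G (head G a) P m" by auto
  have hm: "Y (head G a) \<le> Y m" using chain_verts[OF a(3)] by (auto simp: vl_def)
  show ?case
  proof (cases "y \<le> Y (head G a)")
    case True
    hence eq: "y = Y (head G a)" "Y (head G a) = Y m" using hm Cons.prems by auto
    hence "P = []" using chain_nonempty_lt[OF a(3)] by auto
    hence "head G a = m" using a(3) by simp
    thus ?thesis using True eq phi_ends(2)[OF a(1)] cf_ends[OF Cons.prems(2)] by simp
  next
    case False thus ?thesis using Cons.IH[OF a(3) Cons.prems(2,3)] by simp
  qed
qed

end

context updraw begin

lemma finV: "finite (verts G)" using fin unfolding fin_digraph_def fin_digraph_axioms_def by auto

lemma source_min:
  assumes ss: "single_source G" and c: "c \<in> verts G" "in_arcs G c = {}"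
  shows "\<forall>v\<in>verts G. Y c \<le> Y v"
proof -
  have fin: "finite ((\<lambda>v. Y v) ` verts G)" using finV by auto
  have ne: "(\<lambda>v. Y v) ` verts G \<noteq> {}" using c by auto
  obtain m where m: "m \<in> verts G" "Y m = Min ((\<lambda>v. Y v) ` verts G)"
    using Min_in[OF fin ne] by auto
  have mle: "\<forall>v\<in>verts G. Y m \<le> Y v" using m Min_le[OF fin] by auto
  have "in_arcs G m = {}"
  proof (rule ccontr)
    assume "in_arcs G m \<noteq> {}"
    then obtain f where "f \<in> in_arcs G m" by blast
    hence f: "f \<in> arcs G" "head G f = m" by auto
    have "tail G f \<in> verts G" using wf_digraph.tail_in_verts[OF wf f(1)] .
    thus False using arc_Y[OF f(1)] f(2) mle by force
  qed
  hence "in_degree G m = 0" "in_degree G c = 0" using c unfolding in_degree_def by auto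
  hence "c = m" using ss m(1) c(1) unfolding single_source_def by auto
  thus ?thesis using mle by simp
qed

definition "two_ch a b \<longleftrightarrow> (\<exists>w P Q. chain G w P a \<and> chain G w Q b \<and> set (vl G w P) \<inter> set (vl G w Q) = {w})"

lemma two_ch_sym: "two_ch a b \<Longrightarrow> two_ch b a" unfolding two_ch_def by blast

lemma descend:
  assumes ss: "single_source G" and ab: "a \<in> verts G" "b \<in> verts G" "a \<noteq> b" "Y b \<le> Y a"
    and IH: "\<And>c. c \<in> verts G \<Longrightarrow> Y c < Y a \<Longrightarrow> two_ch c b"
  shows "two_ch a b"
proof -
  have "in_arcs G a \<noteq> {}"
  proof
    assume na: "in_arcs G a = {}"
    have amin: "\<forall>v\<in>verts G. Y a \<le> Y v" using source_min[OF ss ab(1) na] .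
    have "in_arcs G b = {}"
    proof (rule ccontr)
      assume "in_arcs G b \<noteq> {}"
      then obtain f where "f \<in> in_arcs G b" by blast
    hence f: "f \<in> arcs G" "head G f = b" by auto
      have "tail G f \<in> verts G" using wf_digraph.tail_in_verts[OF wf f(1)] .
      thus False using arc_Y[OF f(1)] f(2) amin ab(4) by force
    qed
    hence "in_degree G a = 0" "in_degree G b = 0" using na unfolding in_degree_def by auto
    thus False using ss ab unfolding single_source_def by auto
  qed
  then obtain f where "f \<in> in_arcs G a" by blast
  hence f: "f \<in> arcs G" "head G f = a" by auto
  define c where "c = tail G f"
  have cv: "c \<in> verts G" unfolding c_def using wf_digraph.tail_in_verts[OF wf f(1)] .
  have ca: "Y c < Y a" using arc_Y[OF f(1)] f(2) c_def by simp
  obtain w P Q where wPQ: "chain G w P c" "chain G w Q b" "set (vl G w P) \<inter> set (vl G w Q) = {w}"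
    using IH[OF cv ca] unfolding two_ch_def by blast
  have ch: "chain G w (P @ [f]) a" using chain_append wPQ(1) f ab(1) c_def by auto
  have anQ: "a \<notin> set (vl G w Q)" using chain_verts[OF wPQ(2)] ab by force
  have "set (vl G w (P @ [f])) = set (vl G w P) \<union> {a}" using f(2) by (auto simp: vl_def)
  hence "set (vl G w (P @ [f])) \<inter> set (vl G w Q) = {w}" using wPQ(3) anQ by auto
  thus ?thesis using ch wPQ(2) unfolding two_ch_def by blast
qed

lemma two_chains:
  assumes ss: "single_source G"
  shows "a \<in> verts G \<Longrightarrow> b \<in> verts G \<Longrightarrow> two_ch a b"
proof (induction "card {z\<in>verts G. Y z < Y a} + card {z\<in>verts G. Y z < Y b}" arbitrary: a b rule: less_induct)
  case less
  have mono: "card {z\<in>verts G. Y z < Y c} < card {z\<in>verts G. Y z < Y a}" if "c \<in> verts G" "Y c < Y a" for c a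
  proof (rule psubset_card_mono)
    show "finite {z\<in>verts G. Y z < Y a}" using finV by auto
    show "{z\<in>verts G. Y z < Y c} \<subset> {z\<in>verts G. Y z < Y a}" using that by auto
  qed
  show ?case
  proof (cases "a = b")
    case True
    have "chain G a [] a" using less.prems by simp
    moreover have "set (vl G a []) \<inter> set (vl G a []) = {a}" by (simp add: vl_def)
    ultimately show ?thesis using True unfolding two_ch_def by blast
  next
    case False
    show ?thesis
    proof (cases "Y b \<le> Y a")
      case True
      show ?thesis
      proof (rule descend[OF ss less.prems False True])
        fix c assume c: "c \<in> verts G" "Y c < Y a"
        show "two_ch c b" using less.hyps[OF _ c(1) less.prems(2)] mono[OF c] by simp
      qed
    next
      case F2: False
      have "two_ch b a"
      proof (rule descend[OF ss less.prems(2,1)])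
        show "b \<noteq> a" using False by simp
        show "Y a \<le> Y b" using F2 by simp
        fix c assume c: "c \<in> verts G" "Y c < Y b"
        have "two_ch a c" using less.hyps[OF _ less.prems(1) c(1)] mono[OF c] by simp
        thus "two_ch c a" by (rule two_ch_sym)
      qed
      thus ?thesis by (rule two_ch_sym)
    qed
  qed
qed

end

context updraw begin

lemma key:
  assumes ss: "single_source G" and e1: "e1 \<in> arcs G" and e2: "e2 \<in> arcs G" and ne: "e1 \<noteq> e2"
    and hh: "head G e1 = head G e2" and lne: "left_near_end \<gamma> e1 e2"
  shows "\<exists>f g. Y (tail G e1) < Y (head G e1) \<and> 
     (\<forall>y\<in>{Y (tail G e1)..Y (head G e1)}. f y = phi \<gamma> e1 y) \<and>
     (\<forall>y\<in>{Y (tail G e2)..Y (head G e1)}. g y = phi \<gamma> e2 y) \<and>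
     (\<forall>x0. \<forall>y0\<in>{Y (tail G e1)<..<Y (head G e1)} \<union> {Y (tail G e2)<..<Y (head G e1)}. 
         f y0 < x0 \<longrightarrow> x0 < g y0 \<longrightarrow> (x0, y0) \<notin> outside (drawing_set G pos \<gamma>))
     \<and> (\<forall>y0\<in>{Y (tail G e1)<..<Y (head G e1)} \<union> {Y (tail G e2)<..<Y (head G e1)}. f y0 < g y0)"
proof -
  define u where "u = tail G e1"
  define x where "x = tail G e2"
  define v where "v = head G e1"
  have hv2: "head G e2 = v" using hh v_def by simp
  have uv: "u \<in> verts G" "x \<in> verts G" "v \<in> verts G"
    using wf_digraph.tail_in_verts[OF wf e1] wf_digraph.tail_in_verts[OF wf e2]
      wf_digraph.head_in_verts[OF wf e1] u_def x_def v_def by auto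
  have Yu: "Y u < Y v" using arc_Y[OF e1] u_def v_def by simp
  have Yx: "Y x < Y v" using arc_Y[OF e2] x_def hv2 by simp
  obtain w P Q where wPQ: "chain G w P u" "chain G w Q x" "set (vl G w P) \<inter> set (vl G w Q) = {w}"
    using two_chains[OF ss uv(1,2)] unfolding two_ch_def by blast
  define L where "L = P @ [e1]"
  define R where "R = Q @ [e2]"
  have c1: "chain G u [e1] v" using e1 u_def v_def uv by simp
  have c2: "chain G x [e2] v" using e2 x_def hv2 uv by simp
  have cL: "chain G w L v" unfolding L_def using chain_append wPQ(1) c1 by blast
  have cR: "chain G w R v" unfolding R_def using chain_append wPQ(2) c2 by blast
  define f where "f = cf G pos \<gamma> w L"
  define g where "g = cf G pos \<gamma> w R"
  define a where "a = Y w"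
  define b where "b = Y v"
  have ab: "a < b" using chain_nonempty_lt[OF cL] L_def a_def b_def by simp
  have au: "a \<le> Y u" "a \<le> Y x" using chain_verts[OF wPQ(1)] chain_verts[OF wPQ(2)] a_def
    by (auto simp: vl_def)
  have contf: "continuous_on {a..b} f" using cf_cont[OF cL] f_def a_def b_def by simp
  have contg: "continuous_on {a..b} g" using cf_cont[OF cR] g_def a_def b_def by simp
  have fa: "f a = g a" "f b = g b" using cf_ends[OF cL] cf_ends[OF cR] f_def g_def a_def b_def by auto
  have inD: "\<forall>y\<in>{a..b}. (f y, y) \<in> drawing_set G pos \<gamma> \<and> (g y, y) \<in> drawing_set G pos \<gamma>"
  proof
    fix y assume y: "y \<in> {a..b}"
    obtain a1 where a1: "a1 \<in> set L" "(f y, y) \<in> path_image (\<gamma> a1)"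
      using cf_on_arc[OF cL] y L_def f_def a_def b_def by auto
    obtain a2 where a2: "a2 \<in> set R" "(g y, y) \<in> path_image (\<gamma> a2)"
      using cf_on_arc[OF cR] y R_def g_def a_def b_def by auto
    have "a1 \<in> arcs G" "a2 \<in> arcs G" using chain_arcs[OF cL a1(1)] chain_arcs[OF cR a2(1)] by auto
    thus "(f y, y) \<in> drawing_set G pos \<gamma> \<and> (g y, y) \<in> drawing_set G pos \<gamma>"
      using a1 a2 unfolding drawing_set_def by auto
  qed
  have fe1: "f y = phi \<gamma> e1 y" if "y \<in> {Y u..Y v}" for y
  proof -
    have "f y = cf G pos \<gamma> u [e1] y" unfolding f_def L_def using cf_append[OF wPQ(1) c1] that by auto
    thus ?thesis using that v_def by simp
  qed
  have ge2: "g y = phi \<gamma> e2 y" if "y \<in> {Y x..Y v}" for y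
  proof -
    have "g y = cf G pos \<gamma> x [e2] y" unfolding g_def R_def using cf_append[OF wPQ(2) c2] that by auto
    thus ?thesis using that hv2 by simp
  qed
  have vP: "v \<notin> set (vl G w P)" using chain_verts[OF wPQ(1)] Yu by force
  have vQ: "v \<notin> set (vl G w Q)" using chain_verts[OF wPQ(2)] Yx by force
  have VL: "set (vl G w L) = set (vl G w P) \<union> {v}" using L_def v_def by (auto simp: vl_def)
  have VR: "set (vl G w R) = set (vl G w Q) \<union> {v}" using R_def hv2 by (auto simp: vl_def)
  have VLR: "set (vl G w L) \<inter> set (vl G w R) \<subseteq> {w, v}" using VL VR wPQ(3) by auto
  have neq: "f y \<noteq> g y" if y: "y \<in> {a<..<b}" for y
  proof
    assume eq: "f y = g y"
    have yy: "y \<in> {Y w..Y v}" using y a_def b_def by auto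
    have "L \<noteq> []" using L_def by simp
    from cf_on_arc[OF cL this yy] obtain a1 where a1: "a1 \<in> set L" "(f y, y) \<in> path_image (\<gamma> a1)"
      unfolding f_def by blast
    have "R \<noteq> []" using R_def by simp
    from cf_on_arc[OF cR this yy] obtain a2 where a2: "a2 \<in> set R" "(f y, y) \<in> path_image (\<gamma> a2)"
      unfolding g_def using eq g_def by auto
    have A1: "a1 \<in> arcs G" "tail G a1 \<in> set (vl G w L)" "head G a1 \<in> set (vl G w L)"
      using chain_arcs[OF cL a1(1)] by auto
    have A2: "a2 \<in> arcs G" "tail G a2 \<in> set (vl G w R)" "head G a2 \<in> set (vl G w R)"
      using chain_arcs[OF cR a2(1)] by auto
    show False
    proof (cases "a1 = a2")
      case False
      hence "(f y, y) \<in> pos ` ({tail G a1, head G a1} \<inter> {tail G a2, head G a2})"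
        using D A1(1) A2(1) a1(2) a2(2) unfolding upward_planar_drawing_def by blast
      then obtain z where z: "z \<in> {tail G a1, head G a1}" "z \<in> {tail G a2, head G a2}" "(f y, y) = pos z"
        by auto
      have "z \<in> {w, v}" using z A1 A2 VLR by auto
      moreover have "Y z = y" using z(3) by (metis snd_conv)
      ultimately show False using y a_def b_def by auto
    next
      case True
      have tw: "tail G a1 \<in> {w, v}" "head G a1 \<in> {w, v}" using A1 A2 True VLR by auto
      have lt: "Y (tail G a1) < Y (head G a1)" using arc_Y[OF A1(1)] .
      have wv: "Y w < Y v" using ab a_def b_def by simp
      have hv: "head G a1 = v" using tw lt wv by auto
      have "a1 = e1"
      proof (rule ccontr)
        assume "a1 \<noteq> e1"
        hence "a1 \<in> set P" using a1(1) L_def by auto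
        thus False using chain_arcs[OF wPQ(1)] hv vP by blast
      qed
      moreover have "a2 = e2"
      proof (rule ccontr)
        assume "a2 \<noteq> e2"
        hence "a2 \<in> set Q" using a2(1) R_def by auto
        thus False using chain_arcs[OF wPQ(2)] hv True vQ by blast
      qed
      ultimately show False using True ne by simp
    qed
  qed
  obtain \<delta> where \<delta>: "\<delta> > 0" "\<delta> \<le> 1"
    "\<forall>s\<in>{1-\<delta><..<1}. \<forall>t\<in>{1-\<delta><..<1}. snd (\<gamma> e1 s) = snd (\<gamma> e2 t) \<longrightarrow> fst (\<gamma> e1 s) < fst (\<gamma> e2 t)"
    using lne unfolding left_near_end_def by blast
  have sm1: "strict_mono_on {0..1} (\<lambda>t. snd (\<gamma> e1 t))" using arc_basic(1)[OF e1] .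
  have sm2: "strict_mono_on {0..1} (\<lambda>t. snd (\<gamma> e2 t))" using arc_basic(1)[OF e2] .
  define lo where "lo = max (max (Y u) (Y x)) (max (snd (\<gamma> e1 (1-\<delta>))) (snd (\<gamma> e2 (1-\<delta>))))"
  have "snd (\<gamma> e1 (1-\<delta>)) < snd (\<gamma> e1 1)" using \<delta> by (intro strict_mono_onD[OF sm1]) auto
  hence l1: "snd (\<gamma> e1 (1-\<delta>)) < b" using arc_basic(4)[OF e1] b_def v_def by simp
  have "snd (\<gamma> e2 (1-\<delta>)) < snd (\<gamma> e2 1)" using \<delta> by (intro strict_mono_onD[OF sm2]) auto
  hence l2: "snd (\<gamma> e2 (1-\<delta>)) < b" using arc_basic(4)[OF e2] b_def hv2 by simp
  have lob: "lo < b" using l1 l2 Yu Yx b_def lo_def by auto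
  define y1 where "y1 = (lo + b) / 2"
  have y1: "lo < y1" "y1 < b" using lob y1_def by auto
  have y1u: "y1 \<in> {Y u..Y v}" "y1 \<in> {Y x..Y v}" using y1 lo_def b_def by auto
  define s1 where "s1 = hinv \<gamma> e1 y1"
  define t1 where "t1 = hinv \<gamma> e2 y1"
  have s1: "s1 \<in> {0..1}" "snd (\<gamma> e1 s1) = y1" using hinv_props[OF e1] y1u u_def v_def s1_def by auto
  have t1: "t1 \<in> {0..1}" "snd (\<gamma> e2 t1) = y1" using hinv_props[OF e2] y1u x_def hv2 t1_def by auto
  have s1r: "s1 \<in> {1-\<delta><..<1}"
  proof -
    have "\<not> s1 \<le> 1 - \<delta>"
    proof
      assume "s1 \<le> 1 - \<delta>"
      hence "snd (\<gamma> e1 s1) \<le> snd (\<gamma> e1 (1-\<delta>))" using s1(1) \<delta> by (intro strict_mono_on_leD[OF sm1]) auto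
      thus False using s1(2) y1 lo_def by auto
    qed
    moreover have "s1 \<noteq> 1" using s1(2) y1 arc_basic(4)[OF e1] b_def v_def by auto
    ultimately show ?thesis using s1(1) by auto
  qed
  have t1r: "t1 \<in> {1-\<delta><..<1}"
  proof -
    have "\<not> t1 \<le> 1 - \<delta>"
    proof
      assume "t1 \<le> 1 - \<delta>"
      hence "snd (\<gamma> e2 t1) \<le> snd (\<gamma> e2 (1-\<delta>))" using t1(1) \<delta> by (intro strict_mono_on_leD[OF sm2]) auto
      thus False using t1(2) y1 lo_def by auto
    qed
    moreover have "t1 \<noteq> 1" using t1(2) y1 arc_basic(4)[OF e2] b_def hv2 by auto
    ultimately show ?thesis using t1(1) by auto
  qed
  have "fst (\<gamma> e1 s1) < fst (\<gamma> e2 t1)" using \<delta>(3) s1r t1r s1(2) t1(2) by auto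
  hence fg1: "f y1 < g y1" using fe1[OF y1u(1)] ge2[OF y1u(2)] s1_def t1_def unfolding phi_def by simp
  have y1ab: "y1 \<in> {a<..<b}" using y1 au lo_def by auto
  have lt: "\<forall>y\<in>{a<..<b}. f y < g y"
  proof
    fix y assume y: "y \<in> {a<..<b}"
    show "f y < g y"
    proof (rule ccontr)
      assume "\<not> f y < g y"
      hence gf: "g y < f y" using neq[OF y] by auto
      have sub: "{min y y1..max y y1} \<subseteq> {a..b}" using y y1ab by auto
      have subo: "{min y y1..max y y1} \<subseteq> {a<..<b}" using y y1ab by auto
      have cd: "continuous_on {min y y1..max y y1} (\<lambda>z. g z - f z)"
        "continuous_on {min y y1..max y y1} (\<lambda>z. f z - g z)"
        using continuous_on_subset[OF contf sub] continuous_on_subset[OF contg sub]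
        by (auto intro: continuous_intros)
      have "\<exists>z. min y y1 \<le> z \<and> z \<le> max y y1 \<and> f z = g z"
      proof (cases "y \<le> y1")
        case True
        have "\<exists>z. y \<le> z \<and> z \<le> y1 \<and> g z - f z = 0"
          by (rule IVT'[where f="\<lambda>z. g z - f z"]) (use gf fg1 True cd in auto)
        thus ?thesis using True by auto
      next
        case False
        have "\<exists>z. y1 \<le> z \<and> z \<le> y \<and> f z - g z = 0"
          by (rule IVT'[where f="\<lambda>z. f z - g z"]) (use gf fg1 False cd in auto)
        thus ?thesis using False by auto
      qed
      then obtain z where z: "min y y1 \<le> z" "z \<le> max y y1" "f z = g z" by auto
      have "z \<in> {a<..<b}" using z subo by auto
      thus False using neq z(3) by auto
    qed
  qed
  have ranges: "{Y u<..<Y v} \<union> {Y x<..<Y v} \<subseteq> {a<..<b}" using au a_def b_def by auto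
  show ?thesis
  proof (intro exI conjI)
    show "Y (tail G e1) < Y (head G e1)" using arc_Y[OF e1] .
    show "\<forall>y\<in>{Y (tail G e1)..Y (head G e1)}. f y = phi \<gamma> e1 y" using fe1 u_def v_def by auto
    show "\<forall>y\<in>{Y (tail G e2)..Y (head G e1)}. g y = phi \<gamma> e2 y" using ge2 x_def v_def by auto
    show "\<forall>x0. \<forall>y0\<in>{Y (tail G e1)<..<Y (head G e1)} \<union> {Y (tail G e2)<..<Y (head G e1)}.
         f y0 < x0 \<longrightarrow> x0 < g y0 \<longrightarrow> (x0, y0) \<notin> outside (drawing_set G pos \<gamma>)"
    proof (intro allI ballI impI)
      fix x0 y0 assume y0: "y0 \<in> {Y (tail G e1)<..<Y (head G e1)} \<union> {Y (tail G e2)<..<Y (head G e1)}"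
        and x0: "f y0 < x0" "x0 < g y0"
      show "(x0, y0) \<notin> outside (drawing_set G pos \<gamma>)"
        by (rule region_not_outside[OF ab contf contg fa lt inD _ x0]) (use y0 ranges u_def x_def v_def in auto)
    qed
    show "\<forall>y0\<in>{Y (tail G e1)<..<Y (head G e1)} \<union> {Y (tail G e2)<..<Y (head G e1)}. f y0 < g y0"
      using lt ranges u_def x_def v_def by auto
  qed
qed

end

theorem mainTheorem5:
  fixes G :: "('a, 'b) pre_digraph"
    and pos :: "'a \<Rightarrow> real \<times> real"
    and \<gamma> :: "'b \<Rightarrow> real \<Rightarrow> real \<times> real"
  assumes "fin_digraph G"
    and "single_source G"
    and "\<forall>v\<in>verts G. in_degree G v \<le> 2 \<and> out_degree G v \<le> 2"
    and "upward_planar_drawing G pos \<gamma>"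
  shows "\<forall>e\<in>arcs G. \<not> bad_wrt_outer_face G pos \<gamma> e"
proof
  fix e assume e: "e \<in> arcs G"
  interpret updraw G pos \<gamma> using assms(1,4) by (simp add: updraw_def)
  have ss: "single_source G" using assms(2) .
  have sm: "strict_mono_on {0..1} (\<lambda>t. snd (\<gamma> e t))" using arc_basic(1)[OF e] .
  have yrange: "snd (\<gamma> e s) \<in> {Y (tail G e)<..<Y (head G e)}" if "s \<in> {0<..<1}" for s
  proof -
    have "snd (\<gamma> e 0) < snd (\<gamma> e s)" "snd (\<gamma> e s) < snd (\<gamma> e 1)"
      using that by (auto intro!: strict_mono_onD[OF sm])
    thus ?thesis using arc_basic(3,4)[OF e] by simp
  qed
  show "\<not> bad_wrt_outer_face G pos \<gamma> e"
  proof
    assume "bad_wrt_outer_face G pos \<gamma> e"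
    hence "(left_incoming G \<gamma> e \<and> right_face_outer G pos \<gamma> e) \<or>
           (right_incoming G \<gamma> e \<and> left_face_outer G pos \<gamma> e)"
      unfolding bad_wrt_outer_face_def by auto
    thus False
    proof
      assume "left_incoming G \<gamma> e \<and> right_face_outer G pos \<gamma> e"
      then obtain e' s \<epsilon> where e': "e' \<in> arcs G" "e' \<noteq> e" "head G e' = head G e" "left_near_end \<gamma> e e'"
        and s: "s \<in> {0<..<1}" and \<epsilon>: "\<epsilon> > 0" "\<forall>t\<in>{0<..<\<epsilon>}. \<gamma> e s + (t, 0) \<in> outside (drawing_set G pos \<gamma>)"
        unfolding left_incoming_def right_face_outer_def by blast
      obtain f g where fg: "\<forall>y\<in>{Y (tail G e)..Y (head G e)}. f y = phi \<gamma> e y"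
        "\<forall>x0. \<forall>y0\<in>{Y (tail G e)<..<Y (head G e)} \<union> {Y (tail G e')<..<Y (head G e)}. 
           f y0 < x0 \<longrightarrow> x0 < g y0 \<longrightarrow> (x0, y0) \<notin> outside (drawing_set G pos \<gamma>)"
        "\<forall>y0\<in>{Y (tail G e)<..<Y (head G e)} \<union> {Y (tail G e')<..<Y (head G e)}. f y0 < g y0"
        using key[OF ss e e'(1) e'(2)[symmetric] e'(3)[symmetric] e'(4)] by blast
      define y0 where "y0 = snd (\<gamma> e s)"
      have y0r: "y0 \<in> {Y (tail G e)<..<Y (head G e)}" using yrange[OF s] y0_def by simp
      have fy0: "f y0 = fst (\<gamma> e s)" using fg(1) y0r phi_param[OF e, of s] s y0_def by auto
      have lt: "f y0 < g y0" using fg(3) y0r by auto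
      define t where "t = min \<epsilon> (g y0 - f y0) / 2"
      have t: "t \<in> {0<..<\<epsilon>}" "t < g y0 - f y0" using \<epsilon> lt t_def by auto
      have "\<gamma> e s + (t, 0) = (f y0 + t, y0)" using fy0 y0_def by (metis add_Pair add_0_right prod.collapse)
      moreover have "(f y0 + t, y0) \<notin> outside (drawing_set G pos \<gamma>)"
        using fg(2) y0r t by auto
      ultimately show False using \<epsilon>(2) t(1) by metis
    next
      assume "right_incoming G \<gamma> e \<and> left_face_outer G pos \<gamma> e"
      then obtain e' s \<epsilon> where e': "e' \<in> arcs G" "e' \<noteq> e" "head G e' = head G e" "left_near_end \<gamma> e' e"
        and s: "s \<in> {0<..<1}" and \<epsilon>: "\<epsilon> > 0" "\<forall>t\<in>{0<..<\<epsilon>}. \<gamma> e s - (t, 0) \<in> outside (drawing_set G pos \<gamma>)"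
        unfolding right_incoming_def left_face_outer_def by blast
      obtain f g where fg: "\<forall>y\<in>{Y (tail G e)..Y (head G e')}. g y = phi \<gamma> e y"
        "\<forall>x0. \<forall>y0\<in>{Y (tail G e')<..<Y (head G e')} \<union> {Y (tail G e)<..<Y (head G e')}. 
           f y0 < x0 \<longrightarrow> x0 < g y0 \<longrightarrow> (x0, y0) \<notin> outside (drawing_set G pos \<gamma>)"
        "\<forall>y0\<in>{Y (tail G e')<..<Y (head G e')} \<union> {Y (tail G e)<..<Y (head G e')}. f y0 < g y0"
        using key[OF ss e'(1) e e'(2) e'(3) e'(4)] by blast
      define y0 where "y0 = snd (\<gamma> e s)"
      have y0r: "y0 \<in> {Y (tail G e)<..<Y (head G e')}" using yrange[OF s] y0_def e'(3) by simp
      have gy0: "g y0 = fst (\<gamma> e s)" using fg(1) y0r phi_param[OF e, of s] s y0_def by auto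
      have lt: "f y0 < g y0" using fg(3) y0r by auto
      define t where "t = min \<epsilon> (g y0 - f y0) / 2"
      have t: "t \<in> {0<..<\<epsilon>}" "t < g y0 - f y0" using \<epsilon> lt t_def by auto
      have "\<gamma> e s - (t, 0) = (g y0 - t, y0)" using gy0 y0_def by (metis diff_Pair diff_0_right prod.collapse)
      moreover have "(g y0 - t, y0) \<notin> outside (drawing_set G pos \<gamma>)"
        using fg(2) y0r t by auto
      ultimately show False using \<epsilon>(2) t(1) by metis
    qed
  qed
qed

end
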